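(* Let $k$ be such that $n = k\,2^{(k+9)/2}$ is an integer divisible by $k$. Then, for $k$ sufficiently large, $$T(\mathcal{F}_2^4) < k^3 f(n,k),$$ where $f(n,k) = \binom{k}{3}\left(\frac{n}{k}\right)^{4k-9}2^{-4\binom{k}{2}+9}$.
   Context: Partition the vertex set of $K_n$ into $k$ classes $V_1,\dots,V_k$, each of size $n/k$. Let $X=\{\{v_i,v_j\}: v_i\in V_i,\ v_j\in V_j,\ i\ne j\}$. Let $\mathcal{F}=\{\binom{S}{2}: S\subseteq V_1\cup\dots\cup V_k,\ |S\cap V_i|=1 \text{ for all } i\}$ be the family of edge sets of transversal $k$-cliques. For a family $\mathcal{H}$ of finite sets, $T(\mathcal{H}) = \sum_{H\in\mathcal{H}}2^{-|H|}$. The family of $4$-clusters is $$\mathcal{F}_2^4=\left\{E_1\cup E_2\cup E_3\cup E_4 : \{E_1,\dots,E_4\}\in\binom{\mathcal{F}}{4},\ |E_1\cap E_2\cap E_3\cap E_4|\ge 2\right\},$$ i.e. the set of all unions of $4$ distinct members of $\mathcal{F}$ that share at least two elements of $X$. *)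

theory Defs
  imports Complex_Main
begin

text \<open>Vertex set of K_n partitioned into k classes V_0,...,V_(k-1) of size m = n/k;
  vertex (i,a) is the a-th vertex of class V_i.\<close>

definition vclass :: "nat \<Rightarrow> nat \<Rightarrow> nat \<Rightarrow> (nat \<times> nat) set" where
  "vclass k m i = {i} \<times> {0..<m}"

definition verts :: "nat \<Rightarrow> nat \<Rightarrow> (nat \<times> nat) set" where
  "verts k m = (\<Union>i<k. vclass k m i)"

definition crossEdges :: "nat \<Rightarrow> nat \<Rightarrow> (nat \<times> nat) set set" where
  "crossEdges k m = {{u, v} | u v i j. i < k \<and> j < k \<and> i \<noteq> j \<and>
      u \<in> vclass k m i \<and> v \<in> vclass k m j}"

definition pairsOf :: "'a set \<Rightarrow> 'a set set" where
  "pairsOf S = {e. e \<subseteq> S \<and> card e = 2}"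

definition transversal :: "nat \<Rightarrow> nat \<Rightarrow> (nat \<times> nat) set \<Rightarrow> bool" where
  "transversal k m S \<longleftrightarrow> S \<subseteq> verts k m \<and> (\<forall>i<k. card (S \<inter> vclass k m i) = 1)"

definition cliqueFam :: "nat \<Rightarrow> nat \<Rightarrow> (nat \<times> nat) set set set" where
  "cliqueFam k m = pairsOf ` {S. transversal k m S}"

definition clusters4 :: "nat \<Rightarrow> nat \<Rightarrow> (nat \<times> nat) set set set" where
  "clusters4 k m = {E1 \<union> E2 \<union> E3 \<union> E4 | E1 E2 E3 E4.
      E1 \<in> cliqueFam k m \<and> E2 \<in> cliqueFam k m \<and> E3 \<in> cliqueFam k m \<and> E4 \<in> cliqueFam k m \<and>
      card {E1, E2, E3, E4} = 4 \<and>
      card (E1 \<inter> E2 \<inter> E3 \<inter> E4 \<inter> crossEdges k m) \<ge> 2}"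

definition Tw :: "'a set set \<Rightarrow> real" where
  "Tw H = (\<Sum>A\<in>H. (1/2) ^ card A)"

definition fnk :: "nat \<Rightarrow> nat \<Rightarrow> real" where
  "fnk n k = real (k choose 3) * (real n / real k) powr (4 * real k - 9)
             * 2 powr (9 - 4 * real (k choose 2))"

end

theory Submission imports Defs "HOL-Library.FuncSet" begin

definition Gr :: "nat \<Rightarrow> (nat \<Rightarrow> nat) \<Rightarrow> (nat \<times> nat) set" where
  "Gr k g = (\<lambda>i. (i, g i)) ` {..<k}"

definition GG :: "nat \<Rightarrow> nat \<Rightarrow> (nat \<Rightarrow> nat) set" where
  "GG k m = ({..<k} \<rightarrow>\<^sub>E {..<m})"

definition AT :: "nat \<Rightarrow> nat \<Rightarrow> nat set \<Rightarrow> (nat \<Rightarrow> nat) \<Rightarrow> (nat \<Rightarrow> nat) set" where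
  "AT k m T h = {g \<in> GG k m. \<forall>c\<in>T. g c = h c}"

definition Ts :: "nat \<Rightarrow> nat set set" where
  "Ts k = {T. T \<subseteq> {..<k} \<and> card T = 3}"

lemma finite_pairsOf: "finite A \<Longrightarrow> finite (pairsOf A)"
  unfolding pairsOf_def by (rule finite_subset[of _ "Pow A"]) auto

lemma card_pairsOf: "finite A \<Longrightarrow> card (pairsOf A) = card A choose 2"
  unfolding pairsOf_def by (rule n_subsets)

lemma pairsOf_Int: "pairsOf A \<inter> pairsOf B = pairsOf (A \<inter> B)"
  unfolding pairsOf_def by auto

lemma finite_Gr[simp]: "finite (Gr k g)" unfolding Gr_def by auto

lemma card_Gr[simp]: "card (Gr k g) = k"
  unfolding Gr_def by (subst card_image) (auto intro: inj_onI)

lemma finite_GG[simp]: "finite (GG k m)" unfolding GG_def by (auto intro: finite_PiE)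

lemma card_GG: "card (GG k m) = m ^ k"
  unfolding GG_def by (simp add: card_PiE)

lemma finite_AT[simp]: "finite (AT k m T h)" unfolding AT_def by auto

lemma finite_Ts[simp]: "finite (Ts k)" unfolding Ts_def by auto

lemma card_Ts: "card (Ts k) = k choose 3"
  unfolding Ts_def using n_subsets[of "{..<k}" 3] by simp

lemma sum_Pow_card:
  fixes f :: "nat \<Rightarrow> real"
  assumes "finite X"
  shows "(\<Sum>P\<in>Pow X. f (card P)) = (\<Sum>u=0..card X. real (card X choose u) * f u)"
proof -
  have "(\<Sum>P\<in>Pow X. f (card P)) = (\<Sum>u=0..card X. \<Sum>P\<in>{P. P \<in> Pow X \<and> card P = u}. f (card P))"
    by (rule sum.group[symmetric]) (use assms in \<open>auto intro: card_mono\<close>)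
  also have "\<dots> = (\<Sum>u=0..card X. real (card X choose u) * f u)"
  proof (rule sum.cong[OF refl])
    fix u assume "u \<in> {0..card X}"
    have "(\<Sum>P\<in>{P. P \<in> Pow X \<and> card P = u}. f (card P)) = (\<Sum>P\<in>{P. P \<in> Pow X \<and> card P = u}. f u)"
      by (rule sum.cong) auto
    also have "\<dots> = real (card {B. B \<subseteq> X \<and> card B = u}) * f u" by simp
    also have "\<dots> = real (card X choose u) * f u" using n_subsets[OF assms] by simp
    finally show "(\<Sum>P\<in>{P. P \<in> Pow X \<and> card P = u}. f (card P)) = real (card X choose u) * f u" .
  qed
  finally show ?thesis .
qed

lemma clique_Gr:
  assumes "E \<in> cliqueFam k m"
  shows "\<exists>g\<in>GG k m. E = pairsOf (Gr k g)"
proof -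
  obtain S where S: "transversal k m S" "E = pairsOf S" using assms unfolding cliqueFam_def by auto
  have "\<forall>i<k. \<exists>x. S \<inter> vclass k m i = {x}"
    using S(1) unfolding transversal_def by (auto simp: card_1_singleton_iff)
  then obtain f where f: "\<And>i. i < k \<Longrightarrow> S \<inter> vclass k m i = {f i}" by metis
  define g where "g = (\<lambda>i. if i < k then snd (f i) else undefined)"
  have fi: "i < k \<Longrightarrow> f i = (i, g i) \<and> g i < m" for i
  proof -
    assume "i < k"
    then have "f i \<in> {i} \<times> {0..<m}" using f[of i] unfolding vclass_def by blast
    then show ?thesis using \<open>i < k\<close> unfolding g_def by (cases "f i") auto
  qed
  have "g \<in> GG k m" unfolding GG_def PiE_def extensional_def using fi by (auto simp: g_def)
  moreover have "S = Gr k g"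
  proof
    show "Gr k g \<subseteq> S" unfolding Gr_def using f fi by force
    show "S \<subseteq> Gr k g"
    proof
      fix x assume "x \<in> S"
      then obtain i where i: "i < k" "x \<in> vclass k m i" using S(1) unfolding transversal_def verts_def by auto
      then have "x = f i" using f[of i] \<open>x \<in> S\<close> by auto
      then show "x \<in> Gr k g" using fi[OF i(1)] i(1) unfolding Gr_def by auto
    qed
  qed
  ultimately show ?thesis using S by auto
qed

definition UU :: "nat \<Rightarrow> nat set \<times> (nat \<Rightarrow> nat) \<times> (nat \<Rightarrow> nat) \<times> (nat \<Rightarrow> nat) \<times> (nat \<Rightarrow> nat) \<Rightarrow> (nat \<times> nat) set set" where
  "UU k t = (case t of (T,g1,g2,g3,g4) \<Rightarrow>
     pairsOf (Gr k g1) \<union> pairsOf (Gr k g2) \<union> pairsOf (Gr k g3) \<union> pairsOf (Gr k g4))"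

definition Tup :: "nat \<Rightarrow> nat \<Rightarrow> (nat set \<times> (nat \<Rightarrow> nat) \<times> (nat \<Rightarrow> nat) \<times> (nat \<Rightarrow> nat) \<times> (nat \<Rightarrow> nat)) set" where
  "Tup k m = (SIGMA T:Ts k. SIGMA g1:GG k m. AT k m T g1 \<times> AT k m T g1 \<times> AT k m T g1)"

lemma Gr_mem: "(c, y) \<in> Gr k g \<longleftrightarrow> c < k \<and> y = g c"
  unfolding Gr_def by auto

lemma clusters_sub: "clusters4 k m \<subseteq> UU k ` Tup k m"
proof
  fix A assume "A \<in> clusters4 k m"
  then obtain E1 E2 E3 E4 where A: "A = E1 \<union> E2 \<union> E3 \<union> E4"
    "E1 \<in> cliqueFam k m" "E2 \<in> cliqueFam k m" "E3 \<in> cliqueFam k m" "E4 \<in> cliqueFam k m"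
    "card (E1 \<inter> E2 \<inter> E3 \<inter> E4 \<inter> crossEdges k m) \<ge> 2"
    unfolding clusters4_def by blast
  obtain g1 g2 g3 g4 where g: "g1 \<in> GG k m" "g2 \<in> GG k m" "g3 \<in> GG k m" "g4 \<in> GG k m"
    "E1 = pairsOf (Gr k g1)" "E2 = pairsOf (Gr k g2)" "E3 = pairsOf (Gr k g3)" "E4 = pairsOf (Gr k g4)"
    using clique_Gr A(2-5) by metis
  define D where "D = Gr k g1 \<inter> Gr k g2 \<inter> Gr k g3 \<inter> Gr k g4"
  have finD: "finite D" unfolding D_def by auto
  have EI: "E1 \<inter> E2 \<inter> E3 \<inter> E4 = pairsOf D" unfolding D_def g by (simp add: pairsOf_Int)
  have "2 \<le> card (pairsOf D)"
    using A(6) EI card_mono[OF finite_pairsOf[OF finD], of "pairsOf D \<inter> crossEdges k m"] by auto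
  then have "2 \<le> card D choose 2" using card_pairsOf[OF finD] by simp
  then have D3: "3 \<le> card D"
  proof -
    assume h: "2 \<le> card D choose 2"
    { assume "card D \<le> 2"
      then have "card D = 0 \<or> card D = 1 \<or> card D = 2" by auto
      then have False using h by (auto simp: numeral_2_eq_2) }
    then show ?thesis by fastforce
  qed
  have injD: "inj_on fst D" unfolding D_def by (auto intro!: inj_onI simp: Gr_def)
  have "card (fst ` D) \<ge> 3" using D3 card_image[OF injD] by simp
  then obtain T where T: "T \<subseteq> fst ` D" "card T = 3"
    using obtain_subset_with_card_n by metis
  have Tk: "T \<subseteq> {..<k}" using T(1) unfolding D_def Gr_def by auto
  have agree: "\<forall>c\<in>T. g2 c = g1 c \<and> g3 c = g1 c \<and> g4 c = g1 c"
  proof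
    fix c assume "c \<in> T"
    then obtain y where "(c, y) \<in> D" using T(1) by force
    then show "g2 c = g1 c \<and> g3 c = g1 c \<and> g4 c = g1 c" unfolding D_def by (auto simp: Gr_mem)
  qed
  have "(T, g1, g2, g3, g4) \<in> Tup k m"
    unfolding Tup_def AT_def Ts_def using Tk T(2) g(1-4) agree by auto
  moreover have "A = UU k (T, g1, g2, g3, g4)" unfolding UU_def A(1) g by simp
  ultimately show "A \<in> UU k ` Tup k m" by blast
qed

lemma union_step:
  assumes "finite W" "finite S" "\<forall>e\<in>W. e \<subseteq> V"
  shows "(1/2::real) ^ card (W \<union> pairsOf S) \<le> (1/2) ^ card W * (1/2) ^ ((card S choose 2) - (card (S \<inter> V) choose 2))"
proof -
  have sub: "pairsOf (S \<inter> V) \<subseteq> pairsOf S" unfolding pairsOf_def by auto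
  have fS: "finite (pairsOf S)" using finite_pairsOf[OF assms(2)] .
  have disj: "W \<inter> (pairsOf S - pairsOf (S \<inter> V)) = {}" using assms(3) unfolding pairsOf_def by auto
  have "card W + ((card S choose 2) - (card (S \<inter> V) choose 2)) = card W + card (pairsOf S - pairsOf (S \<inter> V))"
    using card_Diff_subset[OF finite_subset[OF sub fS] sub] card_pairsOf[OF assms(2)] card_pairsOf[of "S \<inter> V"] assms(2) by simp
  also have "\<dots> = card (W \<union> (pairsOf S - pairsOf (S \<inter> V)))"
    using card_Un_disjoint[OF assms(1) _ disj] fS by simp
  also have "\<dots> \<le> card (W \<union> pairsOf S)"
    by (rule card_mono) (use assms fS in auto)
  finally have "card W + ((card S choose 2) - (card (S \<inter> V) choose 2)) \<le> card (W \<union> pairsOf S)" .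
  then have "(1/2::real) ^ card (W \<union> pairsOf S) \<le> (1/2) ^ (card W + ((card S choose 2) - (card (S \<inter> V) choose 2)))"
    by (intro power_decreasing) auto
  then show ?thesis by (simp add: power_add)
qed

definition phi :: "nat \<Rightarrow> (nat \<times> nat) set \<Rightarrow> (nat \<Rightarrow> nat) \<Rightarrow> real" where
  "phi k V g = (1/2) ^ ((k choose 2) - (card (Gr k g \<inter> V) choose 2))"

lemma weight_bound:
  "(1/2::real) ^ card (UU k (T,g1,g2,g3,g4)) \<le> (1/2) ^ (k choose 2) * phi k (Gr k g1) g2
      * phi k (Gr k g1 \<union> Gr k g2) g3 * phi k (Gr k g1 \<union> Gr k g2 \<union> Gr k g3) g4"
proof -
  let ?W1 = "pairsOf (Gr k g1)"
  let ?W2 = "?W1 \<union> pairsOf (Gr k g2)"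
  let ?W3 = "?W2 \<union> pairsOf (Gr k g3)"
  have f1: "finite ?W1" "finite ?W2" "finite ?W3" by (auto intro: finite_pairsOf)
  have s1: "(1/2::real) ^ card (?W3 \<union> pairsOf (Gr k g4)) \<le> (1/2) ^ card ?W3 * phi k (Gr k g1 \<union> Gr k g2 \<union> Gr k g3) g4"
    unfolding phi_def using union_step[OF f1(3) finite_Gr, of "Gr k g1 \<union> Gr k g2 \<union> Gr k g3" k g4]
    unfolding pairsOf_def by auto
  have s2: "(1/2::real) ^ card ?W3 \<le> (1/2) ^ card ?W2 * phi k (Gr k g1 \<union> Gr k g2) g3"
    unfolding phi_def using union_step[OF f1(2) finite_Gr, of "Gr k g1 \<union> Gr k g2" k g3]
    unfolding pairsOf_def by auto
  have s3: "(1/2::real) ^ card ?W2 \<le> (1/2) ^ card ?W1 * phi k (Gr k g1) g2"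
    unfolding phi_def using union_step[OF f1(1) finite_Gr, of "Gr k g1" k g2]
    unfolding pairsOf_def by auto
  have c1: "card ?W1 = k choose 2" by (simp add: card_pairsOf)
  have p: "phi k V g \<ge> 0" for V g unfolding phi_def by simp
  have "(1/2::real) ^ card (UU k (T,g1,g2,g3,g4)) = (1/2) ^ card (?W3 \<union> pairsOf (Gr k g4))"
    unfolding UU_def by simp
  also have "\<dots> \<le> (1/2) ^ card ?W3 * phi k (Gr k g1 \<union> Gr k g2 \<union> Gr k g3) g4" by (rule s1)
  also have "\<dots> \<le> (1/2) ^ card ?W2 * phi k (Gr k g1 \<union> Gr k g2) g3 * phi k (Gr k g1 \<union> Gr k g2 \<union> Gr k g3) g4"
    by (rule mult_right_mono[OF s2 p])
  also have "\<dots> \<le> (1/2) ^ card ?W1 * phi k (Gr k g1) g2 * phi k (Gr k g1 \<union> Gr k g2) g3 * phi k (Gr k g1 \<union> Gr k g2 \<union> Gr k g3) g4"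
    by (intro mult_right_mono[OF _ p] s3)
  finally show ?thesis unfolding c1 .
qed

lemma card3: "card {x, y, z::nat} \<le> 3"
  by (auto simp: card_insert_if)

lemma card_fiber:
  assumes V: "V \<subseteq> Gr k a \<union> Gr k b \<union> Gr k d" and T: "T \<in> Ts k"
    and P: "P \<subseteq> {..<k} - T"
  shows "card {g \<in> AT k m T h. {c\<in>{..<k}. (c, g c) \<in> V} - T = P} \<le> 3 ^ card P * m ^ (k - 3 - card P)"
proof -
  define F where "F c = (if c \<in> T then {h c} else if c \<in> P then {a c, b c, d c} else {..<m})" for c
  have sub: "{g \<in> AT k m T h. {c\<in>{..<k}. (c, g c) \<in> V} - T = P} \<subseteq> PiE {..<k} F"
  proof
    fix g assume g: "g \<in> {g \<in> AT k m T h. {c\<in>{..<k}. (c, g c) \<in> V} - T = P}"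
    then have gG: "g \<in> {..<k} \<rightarrow>\<^sub>E {..<m}" and gT: "\<forall>c\<in>T. g c = h c"
      and gP: "{c\<in>{..<k}. (c, g c) \<in> V} - T = P" unfolding AT_def GG_def by auto
    show "g \<in> PiE {..<k} F"
    proof (rule PiE_I)
      fix c assume c: "c \<in> {..<k}"
      show "g c \<in> F c"
      proof (cases "c \<in> T")
        case True then show ?thesis using gT unfolding F_def by auto
      next
        case False
        show ?thesis
        proof (cases "c \<in> P")
          case True
          then have "(c, g c) \<in> V" using gP by auto
          then have "(c, g c) \<in> Gr k a \<or> (c, g c) \<in> Gr k b \<or> (c, g c) \<in> Gr k d" using V by auto
          then show ?thesis using True False unfolding F_def by (auto simp: Gr_mem)
        next
          case False2: False
          then show ?thesis using False gG c unfolding F_def by auto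
        qed
      qed
    next
      fix c assume "c \<notin> {..<k}" then show "g c = undefined" using gG by auto
    qed
  qed
  have "card {g \<in> AT k m T h. {c\<in>{..<k}. (c, g c) \<in> V} - T = P} \<le> card (PiE {..<k} F)"
    by (rule card_mono[OF _ sub]) (auto intro: finite_PiE simp: F_def)
  also have "\<dots> = (\<Prod>c\<in>{..<k}. card (F c))" by (simp add: card_PiE)
  also have "\<dots> \<le> (\<Prod>c\<in>{..<k}. if c \<in> T then 1 else if c \<in> P then 3 else m)"
    by (rule prod_mono) (auto simp: F_def card3)
  also have "\<dots> = (\<Prod>c\<in>{..<k} \<inter> -T. if c \<in> P then 3 else m)"
    by (subst prod.If_cases) auto
  also have "\<dots> = (\<Prod>c\<in>{..<k} \<inter> -T \<inter> {x. x \<in> P}. 3) * (\<Prod>c\<in>{..<k} \<inter> -T \<inter> -{x. x \<in> P}. m)"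
    by (subst prod.If_cases) auto
  also have "\<dots> = 3 ^ card P * m ^ (k - 3 - card P)"
  proof -
    have e1: "{..<k} \<inter> -T \<inter> {x. x \<in> P} = P" using P by auto
    have e2: "{..<k} \<inter> -T \<inter> -{x. x \<in> P} = ({..<k} - T) - P" by auto
    have Tk: "T \<subseteq> {..<k}" "card T = 3" using T unfolding Ts_def by auto
    then have "finite T" using finite_subset by blast
    then have cX: "card ({..<k} - T) = k - 3" using Tk by (simp add: card_Diff_subset)
    have "card (({..<k} - T) - P) = k - 3 - card P"
      using card_Diff_subset[OF finite_subset[OF P] P] cX by simp
    then show ?thesis using e1 e2 by simp
  qed
  finally show ?thesis .
qed

lemma step_sum:
  assumes V: "V \<subseteq> Gr k a \<union> Gr k b \<union> Gr k d" and T: "T \<in> Ts k" and hT: "\<forall>c\<in>T. (c, h c) \<in> V"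
  shows "(\<Sum>g\<in>AT k m T h. phi k V g) \<le> (\<Sum>u=0..k-3. real ((k-3) choose u) *
            (3 ^ u * real m ^ (k-3-u) * (1/2) ^ ((k choose 2) - ((3+u) choose 2))))"
proof -
  define Og where "Og g = {c\<in>{..<k}. (c, g c) \<in> V}" for g
  define X where "X = {..<k} - T"
  define \<psi> where "\<psi> u = (1/2::real) ^ ((k choose 2) - ((3+u) choose 2))" for u
  have Tk: "T \<subseteq> {..<k}" "card T = 3" using T unfolding Ts_def by auto
  have fX: "finite X" unfolding X_def by auto
  have "finite T" using Tk finite_subset by blast
  then have cX: "card X = k - 3" unfolding X_def using Tk by (simp add: card_Diff_subset)
  have ph: "phi k V g = \<psi> (card (Og g - T))" if g: "g \<in> AT k m T h" for g
  proof -
    have "Gr k g \<inter> V = (\<lambda>c. (c, g c)) ` Og g" unfolding Og_def Gr_def by auto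
    then have c1: "card (Gr k g \<inter> V) = card (Og g)" by (simp add: card_image inj_on_def)
    have "T \<subseteq> Og g" using g hT Tk unfolding Og_def AT_def by auto
    moreover have "finite (Og g)" unfolding Og_def by auto
    moreover have "finite T" using Tk finite_subset by blast
    ultimately have "card (Og g - T) = card (Og g) - card T" "card T \<le> card (Og g)"
      by (auto intro: card_Diff_subset card_mono)
    then have "card (Og g) = 3 + card (Og g - T)" using Tk by linarith
    then show ?thesis unfolding phi_def \<psi>_def c1 by simp
  qed
  have "(\<Sum>g\<in>AT k m T h. phi k V g) = (\<Sum>g\<in>AT k m T h. \<psi> (card (Og g - T)))"
    by (rule sum.cong) (auto simp: ph)
  also have "\<dots> = (\<Sum>P\<in>Pow X. \<Sum>g\<in>{g. g \<in> AT k m T h \<and> Og g - T = P}. \<psi> (card (Og g - T)))"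
    by (rule sum.group[of "AT k m T h" "Pow X" "\<lambda>g. Og g - T" "\<lambda>g. \<psi> (card (Og g - T))", symmetric]) (auto simp: fX X_def Og_def)
  also have "\<dots> = (\<Sum>P\<in>Pow X. real (card {g \<in> AT k m T h. Og g - T = P}) * \<psi> (card P))"
  proof (rule sum.cong[OF refl])
    fix P
    have "(\<Sum>g\<in>{g. g \<in> AT k m T h \<and> Og g - T = P}. \<psi> (card (Og g - T))) = (\<Sum>g\<in>{g. g \<in> AT k m T h \<and> Og g - T = P}. \<psi> (card P))"
      by (rule sum.cong) auto
    then show "(\<Sum>g\<in>{g. g \<in> AT k m T h \<and> Og g - T = P}. \<psi> (card (Og g - T))) = real (card {g \<in> AT k m T h. Og g - T = P}) * \<psi> (card P)"
      by simp
  qed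
  also have "\<dots> \<le> (\<Sum>P\<in>Pow X. (3 ^ card P * real m ^ (k - 3 - card P)) * \<psi> (card P))"
  proof (rule sum_mono)
    fix P assume "P \<in> Pow X"
    then have "card {g \<in> AT k m T h. Og g - T = P} \<le> 3 ^ card P * m ^ (k - 3 - card P)"
      using card_fiber[OF V T, of P m h] unfolding Og_def X_def by auto
    then have "real (card {g \<in> AT k m T h. Og g - T = P}) \<le> 3 ^ card P * real m ^ (k - 3 - card P)"
      proof -
      assume h: "card {g \<in> AT k m T h. Og g - T = P} \<le> 3 ^ card P * m ^ (k - 3 - card P)"
      have "real (card {g \<in> AT k m T h. Og g - T = P}) \<le> real (3 ^ card P * m ^ (k - 3 - card P))"
        using h by (rule of_nat_mono)
      then show ?thesis by simp
    qed
    then show "real (card {g \<in> AT k m T h. Og g - T = P}) * \<psi> (card P) \<le> (3 ^ card P * real m ^ (k - 3 - card P)) * \<psi> (card P)"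
      by (rule mult_right_mono) (simp add: \<psi>_def)
  qed
  also have "\<dots> = (\<Sum>u=0..k-3. real ((k-3) choose u) * (3 ^ u * real m ^ (k-3-u) * \<psi> u))"
    using sum_Pow_card[OF fX, of "\<lambda>u. 3 ^ u * real m ^ (k - 3 - u) * \<psi> u"] cX by (simp only:)
  finally show ?thesis unfolding \<psi>_def .
qed



lemma two_choose2: "2 * (n choose 2) = n * (n - 1)"
proof (induction n)
  case 0 then show ?case by simp
next
  case (Suc n)
  have "Suc n choose 2 = (n choose 1) + (n choose 2)"
    by (simp add: numeral_2_eq_2)
  then show ?case using Suc by (cases n) (auto simp: algebra_simps)
qed

lemma sq_le_pow2: "4 \<le> x \<Longrightarrow> x^2 \<le> (2::nat)^x"
proof (induction x rule: dec_induct)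
  case base then show ?case by simp
next
  case (step x)
  have "(Suc x)^2 = x^2 + 2*x + 1" by (simp add: power2_eq_square)
  also have "\<dots> \<le> 2 * x^2"
  proof -
    have "4*x \<le> x*x" using step(1) by (intro mult_right_mono) auto
    moreover have "2*x+1 \<le> 4*x" using step(1) by simp
    ultimately show ?thesis unfolding power2_eq_square by linarith
  qed
  also have "\<dots> \<le> 2 * 2^x" using step(3) by simp
  finally show ?case by simp
qed

lemma natineq:
  assumes "7 \<le> k" "u \<le> k - 3"
  shows "(((k-3) choose u) * 3^u * 2^((3+u) choose 2))^2 \<le> 64 * (2::nat)^(u*(k+9))"
proof -
  have q: "2 * ((3+u) choose 2) = (3+u)*(2+u)" using two_choose2[of "3+u"] by simp
  consider "u = 0" | "u = 1" | "2 \<le> u" by linarith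
  then show ?thesis
  proof cases
    case 1
    have "(3::nat) choose 2 = 3" using two_choose2[of 3] by simp
    then show ?thesis using 1 by simp
  next
    case 2
    have "(4::nat) choose 2 = 6" using two_choose2[of 4] by simp
    then have "(((k-3) choose u) * 3^u * 2^((3+u) choose 2))^2 = 9 * 4096 * (k-3)^2"
      using 2 by (simp add: power2_eq_square)
    also have "\<dots> \<le> 9 * 4096 * 2^(k-3)"
      using sq_le_pow2[of "k-3"] assms(1) by simp
    also have "\<dots> \<le> 64 * 2^(u*(k+9))"
    proof -
      have "k+9 = (k-3)+12" using assms(1) by simp
      then have "(2::nat)^(k+9) = 2^(k-3) * 2^12" by (metis power_add)
      then show ?thesis using 2 by simp
    qed
    finally show ?thesis .
  next
    case 3
    define e where "e = k - 3 - u"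
    have e: "k = u + 3 + e" using assms unfolding e_def by simp
    define N where "N = k - 3 + 2*u + ((3+u) choose 2)"
    have f4: "(4::nat)^u = 2^(2*u)" by (simp add: power_mult)
    have "((k-3) choose u) * 3^u * 2^((3+u) choose 2) \<le> 2^(k-3) * 4^u * 2^((3+u) choose 2)"
      proof (intro mult_mono)
      show "(k - 3) choose u \<le> 2 ^ (k - 3)" by (rule binomial_le_pow2)
      show "(3::nat) ^ u \<le> 4 ^ u" by (rule power_mono) auto
    qed auto
    also have "\<dots> = 2^N" unfolding N_def f4 by (simp only: power_add)
    finally have h: "(((k-3) choose u) * 3^u * 2^((3+u) choose 2))^2 \<le> (2^N)^2"
      by (rule power_mono) simp
    also have "\<dots> = 2^(2*N)" by (simp only: power_mult[symmetric] mult.commute)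
    also have "\<dots> \<le> 2^(6 + u*(k+9))"
    proof (rule power_increasing)
      have "2*e \<le> u*e" using 3 by simp
      moreover have "2*N = 2*(u+e) + 4*u + (3+u)*(2+u)" unfolding N_def e using q by simp
      moreover have "(3+u)*(2+u) = 6 + 5*u + u*u" by (simp add: algebra_simps)
      moreover have "u*(k+9) = u*u + 12*u + u*e" unfolding e by (simp add: algebra_simps)
      moreover have "2*(u+e) = 2*u+2*e" by simp
      ultimately show "2*N \<le> 6 + u*(k+9)" by linarith
    qed simp
    also have "\<dots> = 64 * 2^(u*(k+9))" by (simp only: power_add) simp
    finally show ?thesis .
  qed
qed

lemma half_pow_split: "q \<le> c \<Longrightarrow> (1/2::real)^(c - q) = (1/2)^c * 2^q"
proof -
  assume "q \<le> c"
  then have "(1/2::real)^c = (1/2)^(c-q) * (1/2)^q" by (simp add: power_add[symmetric])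
  then have "(1/2::real)^c * 2^q = (1/2)^(c-q) * ((1/2)^q * 2^q)" by simp
  also have "(1/2::real)^q * 2^q = 1" by (simp add: power_mult_distrib[symmetric])
  finally show ?thesis by simp
qed

lemma term_bound:
  fixes m :: real
  assumes k: "7 \<le> k" and u: "u \<le> k-3" and m2: "m^2 = 2^(k+9)" and m0: "0 < m"
  shows "real ((k-3) choose u) * (3^u * m^(k-3-u) * (1/2)^((k choose 2) - ((3+u) choose 2)))
         \<le> m^(k-3) * (1/2)^((k choose 2) - 3)"
proof -
  define c where "c = k choose 2"
  define q where "q = (3+u) choose 2"
  have qc: "q \<le> c" unfolding q_def c_def by (rule binomial_right_mono) (use u k in simp)
  have "(3::nat) choose 2 = 3" using two_choose2[of 3] by simp
  then have c3: "3 \<le> c" unfolding c_def using binomial_right_mono[of 3 k 2] k by simp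
  define x where "x = real ((k-3) choose u) * 3^u * 2^q"
  define y where "y = 8 * m^u"
  have "x^2 = real ((((k-3) choose u) * 3^u * 2^q)^2)" unfolding x_def by simp
  also have "\<dots> \<le> real (64 * (2::nat)^(u*(k+9)))" unfolding q_def
    using natineq[OF k u] by (rule of_nat_mono)
  also have "\<dots> = y^2"
  proof -
    have "y^2 = 64 * (m^2)^u" unfolding y_def by (simp add: power_mult_distrib power_mult[symmetric] mult.commute)
    also have "\<dots> = 64 * 2^((k+9)*u)" unfolding m2 by (simp add: power_mult)
    finally show ?thesis by (simp add: mult.commute)
  qed
  finally have "x \<le> y" by (rule power2_le_imp_le) (use m0 in \<open>simp add: y_def\<close>)
  have L: "real ((k-3) choose u) * (3^u * m^(k-3-u) * (1/2)^(c - q)) = x * (m^(k-3-u) * (1/2)^c)"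
    unfolding x_def half_pow_split[OF qc] by (simp add: algebra_simps)
  have "k-3 = (k-3-u) + u" using u by simp
  then have mk: "m^(k-3) = m^(k-3-u) * m^u" by (metis power_add)
  have R: "m^(k-3) * (1/2)^(c - 3) = y * (m^(k-3-u) * (1/2)^c)"
    unfolding y_def mk half_pow_split[OF c3] by (simp add: algebra_simps)
  have M: "x * (m^(k-3-u) * (1/2)^c) \<le> y * (m^(k-3-u) * (1/2)^c)"
    using \<open>x \<le> y\<close> m0 by (intro mult_right_mono) auto
  have "real ((k-3) choose u) * (3^u * m^(k-3-u) * (1/2)^(c - q)) \<le> m^(k-3) * (1/2)^(c - 3)"
    unfolding L R by (rule M)
  then show ?thesis unfolding c_def q_def .
qed


lemma sum_Sigma': "finite A \<Longrightarrow> \<forall>x\<in>A. finite (B x) \<Longrightarrow> (\<Sum>t\<in>Sigma A B. F t) = (\<Sum>x\<in>A. \<Sum>y\<in>B x. F (x,y))"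
  using sum.Sigma[of A B "\<lambda>x y. F (x,y)"] by (simp add: case_prod_beta)

definition Bk :: "nat \<Rightarrow> nat \<Rightarrow> real" where
  "Bk k m = real (k-2) * (real m^(k-3) * (1/2)^((k choose 2) - 3))"

lemma phi_sum_B:
  assumes V: "V \<subseteq> Gr k a \<union> Gr k b \<union> Gr k d" and T: "T \<in> Ts k" and hT: "\<forall>c\<in>T. (c, h c) \<in> V"
    and k: "7 \<le> k" and m2: "(real m)^2 = 2^(k+9)" and m0: "0 < m"
  shows "(\<Sum>g\<in>AT k m T h. phi k V g) \<le> Bk k m"
proof -
  have "(\<Sum>g\<in>AT k m T h. phi k V g) \<le> (\<Sum>u=0..k-3. real ((k-3) choose u) *
            (3 ^ u * real m ^ (k-3-u) * (1/2) ^ ((k choose 2) - ((3+u) choose 2))))"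
    by (rule step_sum[OF V T hT])
  also have "\<dots> \<le> (\<Sum>u=0..k-3. real m^(k-3) * (1/2)^((k choose 2) - 3))"
    by (rule sum_mono, rule term_bound[OF k _ m2]) (use m0 in auto)
  also have "\<dots> = Bk k m" unfolding Bk_def using k by (simp add: Suc_diff_Suc)
  finally show ?thesis .
qed


lemma Tw_bound:
  assumes k: "7 \<le> k" and m2: "(real m)^2 = 2^(k+9)" and m0: "0 < m"
  shows "Tw (clusters4 k m) \<le> real (k choose 3) * (real m^k * ((1/2)^(k choose 2) * Bk k m ^ 3))"
proof -
  define C where "C = k choose 2"
  define F where "F (T::nat set) g1 g2 g3 g4 = (1/2::real) ^ C * phi k (Gr k g1) g2
      * phi k (Gr k g1 \<union> Gr k g2) g3 * phi k (Gr k g1 \<union> Gr k g2 \<union> Gr k g3) g4" for T g1 g2 g3 g4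
  have fTup: "finite (Tup k m)" unfolding Tup_def by (auto intro!: finite_SigmaI)
  have phi0: "0 \<le> phi k V g" for V g unfolding phi_def by simp
  have B0: "0 \<le> Bk k m" unfolding Bk_def by simp
  have "Tw (clusters4 k m) \<le> (\<Sum>A\<in>UU k ` Tup k m. (1/2::real) ^ card A)"
    unfolding Tw_def by (rule sum_mono2) (use fTup clusters_sub in auto)
  also have "\<dots> \<le> (\<Sum>t\<in>Tup k m. (1/2::real) ^ card (UU k t))"
    using sum_image_le[OF fTup, of "\<lambda>A. (1/2::real) ^ card A" "UU k"] by (simp add: o_def)
  also have "\<dots> \<le> (\<Sum>t\<in>Tup k m. case t of (T,g1,g2,g3,g4) \<Rightarrow> F T g1 g2 g3 g4)"
  proof (rule sum_mono)
    fix t assume "t \<in> Tup k m"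
    obtain T g1 g2 g3 g4 where t: "t = (T,g1,g2,g3,g4)" by (cases t) auto
    show "(1/2::real) ^ card (UU k t) \<le> (case t of (T,g1,g2,g3,g4) \<Rightarrow> F T g1 g2 g3 g4)"
      unfolding t F_def C_def using weight_bound by simp
  qed
  also have "\<dots> = (\<Sum>T\<in>Ts k. \<Sum>g1\<in>GG k m. \<Sum>g2\<in>AT k m T g1. \<Sum>g3\<in>AT k m T g1. \<Sum>g4\<in>AT k m T g1. F T g1 g2 g3 g4)"
    unfolding Tup_def by (simp add: sum_Sigma' finite_SigmaI)
  also have "\<dots> \<le> (\<Sum>T\<in>Ts k. \<Sum>g1\<in>GG k m. (1/2::real) ^ C * Bk k m ^ 3)"
  proof (intro sum_mono)
    fix T g1 assume T: "T \<in> Ts k" and g1: "g1 \<in> GG k m"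
    have Tk: "\<forall>c\<in>T. c < k" using T unfolding Ts_def by auto
    have in1: "\<forall>c\<in>T. (c, g1 c) \<in> Gr k g1" using Tk by (auto simp: Gr_mem)
    have "(\<Sum>g2\<in>AT k m T g1. \<Sum>g3\<in>AT k m T g1. \<Sum>g4\<in>AT k m T g1. F T g1 g2 g3 g4)
       \<le> (\<Sum>g2\<in>AT k m T g1. \<Sum>g3\<in>AT k m T g1. (1/2::real) ^ C * phi k (Gr k g1) g2 * phi k (Gr k g1 \<union> Gr k g2) g3 * Bk k m)"
    proof (intro sum_mono)
      fix g2 g3
      have "(\<Sum>g4\<in>AT k m T g1. F T g1 g2 g3 g4) = (1/2::real) ^ C * phi k (Gr k g1) g2 * phi k (Gr k g1 \<union> Gr k g2) g3
          * (\<Sum>g4\<in>AT k m T g1. phi k (Gr k g1 \<union> Gr k g2 \<union> Gr k g3) g4)"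
        unfolding F_def by (simp add: sum_distrib_left)
      also have "\<dots> \<le> (1/2::real) ^ C * phi k (Gr k g1) g2 * phi k (Gr k g1 \<union> Gr k g2) g3 * Bk k m"
        by (intro mult_left_mono phi_sum_B[OF _ T _ k m2 m0, of _ g1 g2 g3]) (use in1 phi0 in auto)
      finally show "(\<Sum>g4\<in>AT k m T g1. F T g1 g2 g3 g4) \<le> (1/2::real) ^ C * phi k (Gr k g1) g2 * phi k (Gr k g1 \<union> Gr k g2) g3 * Bk k m" .
    qed
    also have "\<dots> \<le> (\<Sum>g2\<in>AT k m T g1. (1/2::real) ^ C * phi k (Gr k g1) g2 * Bk k m * Bk k m)"
    proof (intro sum_mono)
      fix g2
      have "(\<Sum>g3\<in>AT k m T g1. (1/2::real) ^ C * phi k (Gr k g1) g2 * phi k (Gr k g1 \<union> Gr k g2) g3 * Bk k m)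
          = (1/2::real) ^ C * phi k (Gr k g1) g2 * (\<Sum>g3\<in>AT k m T g1. phi k (Gr k g1 \<union> Gr k g2) g3) * Bk k m"
        by (simp add: sum_distrib_left sum_distrib_right mult.assoc)
      also have "\<dots> \<le> (1/2::real) ^ C * phi k (Gr k g1) g2 * Bk k m * Bk k m"
        by (intro mult_left_mono mult_right_mono phi_sum_B[OF _ T _ k m2 m0, of _ g1 g2 g2]) (use in1 phi0 B0 in auto)
      finally show "(\<Sum>g3\<in>AT k m T g1. (1/2::real) ^ C * phi k (Gr k g1) g2 * phi k (Gr k g1 \<union> Gr k g2) g3 * Bk k m)
          \<le> (1/2::real) ^ C * phi k (Gr k g1) g2 * Bk k m * Bk k m" .
    qed
    also have "\<dots> = (1/2::real) ^ C * (\<Sum>g2\<in>AT k m T g1. phi k (Gr k g1) g2) * Bk k m * Bk k m"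
      by (simp add: sum_distrib_left sum_distrib_right mult.assoc)
    also have "\<dots> \<le> (1/2::real) ^ C * Bk k m * Bk k m * Bk k m"
      by (intro mult_left_mono mult_right_mono phi_sum_B[OF _ T _ k m2 m0, of _ g1 g1 g1]) (use in1 B0 in auto)
    also have "\<dots> = (1/2::real) ^ C * Bk k m ^ 3" by (simp add: power3_eq_cube mult.assoc)
    finally show "(\<Sum>g2\<in>AT k m T g1. \<Sum>g3\<in>AT k m T g1. \<Sum>g4\<in>AT k m T g1. F T g1 g2 g3 g4) \<le> (1/2::real) ^ C * Bk k m ^ 3" .
  qed
  also have "\<dots> = real (k choose 3) * (real m^k * ((1/2)^(k choose 2) * Bk k m ^ 3))"
    by (simp add: card_Ts card_GG C_def)
  finally show ?thesis .
qed


theorem mainTheorem4: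
  shows "\<exists>K. \<forall>k n. k \<ge> K \<longrightarrow> real n = real k * 2 powr ((real k + 9) / 2) \<longrightarrow> k dvd n \<longrightarrow>
           Tw (clusters4 k (n div k)) < real k ^ 3 * fnk n k"
proof (rule exI[of _ 7], intro allI impI)
  fix k n :: nat
  assume k: "7 \<le> k" and n: "real n = real k * 2 powr ((real k + 9) / 2)" and dvd: "k dvd n"
  define m where "m = n div k"
  define M where "M = real m"
  define C where "C = k choose 2"
  have kpos: "0 < real k" using k by simp
  have Mv: "M = 2 powr ((real k + 9) / 2)"
    unfolding M_def m_def using real_of_nat_div[OF dvd] n kpos by simp
  have Mpos: "0 < M" unfolding Mv by simp
  have m0: "0 < m" using Mpos unfolding M_def by simp
  have "M^2 = 2 powr ((real k + 9) / 2) * 2 powr ((real k + 9) / 2)" unfolding Mv by (simp add: power2_eq_square)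
  also have "\<dots> = 2 powr (real (k + 9))" by (simp add: powr_add[symmetric])
  also have "\<dots> = 2^(k+9)" by (rule powr_realpow) simp
  finally have m2: "(real m)^2 = 2^(k+9)" unfolding M_def .
  have "(3::nat) choose 2 = 3" using two_choose2[of 3] by simp
  then have C3: "3 \<le> C" unfolding C_def using binomial_right_mono[of 3 k 2] k by simp
  have nk: "real n / real k = M" unfolding Mv using n kpos by simp
  have e1: "M powr (4 * real k - 9) = M^(4*k-9)"
  proof -
    have h: "4 * real k - 9 = real (4*k-9)" using k by (simp add: of_nat_diff)
    show ?thesis unfolding h by (rule powr_realpow[OF Mpos])
  qed
  have e2: "(2::real) powr (9 - 4 * real C) = (1/2)^(4*C-9)"
  proof -
    have h: "9 - 4 * real C = - real (4*C-9)" using C3 by (simp add: of_nat_diff)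
    have "(2::real) powr (9 - 4 * real C) = inverse (2 powr real (4*C-9))" unfolding h by (rule powr_minus)
    also have "\<dots> = inverse (2^(4*C-9))" by (subst powr_realpow) auto
    also have "\<dots> = (1/2)^(4*C-9)" by (simp add: power_one_over inverse_eq_divide)
    finally show ?thesis .
  qed
  have fnk_eq: "fnk n k = real (k choose 3) * (M^(4*k-9) * (1/2)^(4*C-9))"
    unfolding fnk_def nk e1 C_def[symmetric] e2 by simp
  have xk: "k + (k-3)*3 = 4*k-9" using k by simp
  have xC: "C + (C-3)*3 = 4*C-9" using C3 by simp
  have "Tw (clusters4 k (n div k)) \<le> real (k choose 3) * (M^k * ((1/2)^C * Bk k m ^ 3))"
    using Tw_bound[OF k m2 m0] unfolding m_def M_def C_def .
  also have "\<dots> = real (k-2)^3 * (real (k choose 3) * (M^(k + (k-3)*3) * (1/2)^(C + (C-3)*3)))"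
  proof -
    have p: "(real (k-2) * (M^(k-3) * (1/2::real)^(C-3)))^3 = real (k-2)^3 * (M^((k-3)*3) * (1/2)^((C-3)*3))"
      by (simp only: power_mult_distrib power_mult)
    show ?thesis unfolding Bk_def M_def[symmetric] C_def[symmetric] p power_add
      by (simp only: mult_ac)
  qed
  also have "\<dots> < real k ^ 3 * (real (k choose 3) * (M^(k + (k-3)*3) * (1/2)^(C + (C-3)*3)))"
  proof (rule mult_strict_right_mono)
    have "real (k-2) < real k" using k by simp
    then show "real (k-2)^3 < real k ^ 3" by (rule power_strict_mono) auto
    have "0 < k choose 3" using k by simp
    then show "0 < real (k choose 3) * (M^(k + (k-3)*3) * (1/2)^(C + (C-3)*3))"
      using Mpos by simp
  qed
  also have "\<dots> = real k ^ 3 * fnk n k" unfolding fnk_eq xk xC ..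
  finally show "Tw (clusters4 k (n div k)) < real k ^ 3 * fnk n k" .
qed

end
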